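(* Let $c,d$ be positive integers and define $\phi_{c,d}:\mathbb Z_{>0}^2\to\mathbb Z_{>0}^2$ by $\phi_{c,d}(s,t)=(c,d)$ if $s=t$, $(s-t,d)$ if $s>t$, and $(c,t-s)$ if $s<t$. Let $(c_1,d_1)=(c,d)$ and $(c_{k+1},d_{k+1})=\phi_{c,d}(c_k,d_k)$ for $k\ge1$. Put $e=c/\gcd(c,d)$, $e'=d/\gcd(c,d)$ and $p=e+e'-1$. Then $(c_{k+p},d_{k+p})=(c_k,d_k)$ for all $k\ge1$. Moreover, for arbitrary integers $\tilde c,\tilde d$, define for $k\ge2$: $\mu_k=\min\{c_k,d_k\}$ and $\nu_k=\tilde c+\tilde d$ if $c_k=d_k$, $\nu_k=\tilde d$ if $c_k>d_k$, $\nu_k=\tilde c$ if $c_k<d_k$. Then $$\sum_{k=2}^{p+1}\mu_k=\mathrm{lcm}(c,d),\qquad \sum_{k=2}^{p+1}\nu_k=e\tilde d+e'\tilde c.$$ *)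

theory Defs
  imports Main
begin

definition phi :: "nat \<Rightarrow> nat \<Rightarrow> nat \<times> nat \<Rightarrow> nat \<times> nat" where
  "phi c d st = (let s = fst st; t = snd st in
     if s = t then (c, d) else if s > t then (s - t, d) else (c, t - s))"

definition cdseq :: "nat \<Rightarrow> nat \<Rightarrow> nat \<Rightarrow> nat \<times> nat" where
  "cdseq c d k = (phi c d ^^ (k - 1)) (c, d)"

definition mu :: "nat \<Rightarrow> nat \<Rightarrow> nat \<Rightarrow> nat" where
  "mu c d k = min (fst (cdseq c d k)) (snd (cdseq c d k))"

definition nu :: "nat \<Rightarrow> nat \<Rightarrow> int \<Rightarrow> int \<Rightarrow> nat \<Rightarrow> int" where
  "nu c d ct dt k = (let ck = fst (cdseq c d k); dk = snd (cdseq c d k) in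
     if ck = dk then ct + dt else if ck > dk then dt else ct)"

end

theory Submission
  imports Defs
begin

definition st :: "nat \<Rightarrow> nat \<Rightarrow> nat \<Rightarrow> nat \<times> nat" where
  "st c d x = (c - x mod c, d - x mod d)"

fun XX :: "nat \<Rightarrow> nat \<Rightarrow> nat \<Rightarrow> nat" where
  "XX c d 0 = 0"
| "XX c d (Suc n) = XX c d n + min (c - XX c d n mod c) (d - XX c d n mod d)"

lemma modstep:
  fixes c x m :: nat
  assumes "c > 0" "m \<le> c - x mod c"
  shows "(x + m) mod c = (if m = c - x mod c then 0 else x mod c + m)"
    and "(x + m) div c = x div c + (if m = c - x mod c then 1 else 0)"
proof -
  define q r where "q = x div c" and "r = x mod c"
  have x: "x = q * c + r" and r: "r < c" using assms by (auto simp: q_def r_def)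
  have e: "x + m = q * c + (r + m)" using x by simp
  have rm: "r + m \<le> c" using assms r r_def by simp
  show "(x + m) mod c = (if m = c - x mod c then 0 else x mod c + m)"
  proof (cases "r + m = c")
    case True then show ?thesis unfolding e using r_def by auto
  next
    case False then have "r + m < c" using rm by simp
    then show ?thesis unfolding e using r_def False by auto
  qed
  show "(x + m) div c = x div c + (if m = c - x mod c then 1 else 0)"
  proof (cases "r + m = c")
    case True then show ?thesis unfolding e using r_def q_def assms by simp
  next
    case False then have "r + m < c" using rm by simp
    then have "(q * c + (r + m)) div c = q" using assms by simp
    moreover have "m \<noteq> c - x mod c" using False r_def rm by linarith
    ultimately show ?thesis by (simp only: e q_def if_False)
  qed
qed

lemma step:
  assumes "c > 0" "d > 0"
  shows "phi c d (st c d x) = st c d (x + min (c - x mod c) (d - x mod d))"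
proof -
  define s t where "s = c - x mod c" and "t = d - x mod d"
  have xs: "x mod c < c" "x mod d < d" using assms by auto
  have st: "st c d x = (s, t)" by (simp add: st_def s_def t_def)
  have ph: "phi c d (s, t) = (if s = t then (c, d) else if s > t then (s - t, d) else (c, t - s))"
    by (simp add: phi_def)
  show ?thesis
  proof (cases "s = t")
    case True
    have "s \<le> c - x mod c" "s \<le> d - x mod d" using True by (auto simp: s_def t_def)
    from modstep(1)[OF assms(1) this(1)] modstep(1)[OF assms(2) this(2)] True
    have "(x + s) mod c = 0" "(x + s) mod d = 0" by (auto simp: s_def t_def)
    then show ?thesis using True st ph by (simp add: st_def s_def[symmetric] t_def[symmetric])
  next
    case False
    show ?thesis
    proof (cases "s > t")
      case True
      have m: "min s t = t" using True by simp
      have "t \<le> c - x mod c" "t \<le> d - x mod d" using True by (auto simp: s_def t_def)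
      from modstep(1)[OF assms(1) this(1)] modstep(1)[OF assms(2) this(2)] True
      have "(x + t) mod c = x mod c + t" "(x + t) mod d = 0" by (auto simp: s_def t_def)
      then show ?thesis using True False st ph m
        by (simp add: st_def s_def[symmetric] t_def[symmetric]) (simp add: s_def)
    next
      case F2: False
      then have T: "s < t" using False by simp
      have m: "min s t = s" using T by simp
      have "s \<le> c - x mod c" "s \<le> d - x mod d" using T by (auto simp: s_def t_def)
      from modstep(1)[OF assms(1) this(1)] modstep(1)[OF assms(2) this(2)] T
      have "(x + s) mod c = 0" "(x + s) mod d = x mod d + s" by (auto simp: s_def t_def)
      then show ?thesis using T False F2 st ph m
        by (simp add: st_def s_def[symmetric] t_def[symmetric]) (simp add: t_def)
    qed
  qed
qed

lemma cdseq_XX: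
  assumes "c > 0" "d > 0"
  shows "(phi c d ^^ n) (c, d) = st c d (XX c d n)"
proof (induction n)
  case 0
  then show ?case by (simp add: st_def)
next
  case (Suc n)
  then show ?case using step[OF assms] by simp
qed


declare XX.simps(2)[simp del]

context
  fixes c d :: nat
  assumes cp: "c > 0" and dp: "d > 0"
begin

lemma incs:
  fixes x :: nat
  defines "s \<equiv> c - x mod c" and "t \<equiv> d - x mod d"
  shows "(x + min s t) div c = x div c + (if s \<le> t then 1 else 0)"
    and "(x + min s t) div d = x div d + (if t \<le> s then 1 else 0)"
    and "(x + min s t) mod c = 0 \<longleftrightarrow> s \<le> t"
    and "(x + min s t) mod d = 0 \<longleftrightarrow> t \<le> s"
proof -
  have a: "s > 0" "t > 0" "x mod c < c" using cp dp by (auto simp: s_def t_def)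
  have m1: "min s t \<le> c - x mod c" "min s t \<le> d - x mod d" by (auto simp: s_def t_def)
  have e1: "min s t = c - x mod c \<longleftrightarrow> s \<le> t" by (auto simp: s_def min_def)
  have e2: "min s t = d - x mod d \<longleftrightarrow> t \<le> s" by (auto simp: t_def min_def)
  show "(x + min s t) div c = x div c + (if s \<le> t then 1 else 0)"
    using modstep(2)[OF cp m1(1)] e1 by presburger
  show "(x + min s t) div d = x div d + (if t \<le> s then 1 else 0)"
    using modstep(2)[OF dp m1(2)] e2 by presburger
  have "x mod c + min s t > 0" using a by simp
  then show "(x + min s t) mod c = 0 \<longleftrightarrow> s \<le> t"
    using modstep(1)[OF cp m1(1)] e1 by (metis less_numeral_extra(3))
  have "x mod d + min s t > 0" using a by simp
  then show "(x + min s t) mod d = 0 \<longleftrightarrow> t \<le> s"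
    using modstep(1)[OF dp m1(2)] e2 by (metis less_numeral_extra(3))
qed

lemma divinc:
  "XX c d (Suc n) div c = XX c d n div c + (if c - XX c d n mod c \<le> d - XX c d n mod d then 1 else 0)"
  "XX c d (Suc n) div d = XX c d n div d + (if d - XX c d n mod d \<le> c - XX c d n mod c then 1 else 0)"
  "XX c d (Suc n) mod c = 0 \<longleftrightarrow> c - XX c d n mod c \<le> d - XX c d n mod d"
  "XX c d (Suc n) mod d = 0 \<longleftrightarrow> d - XX c d n mod d \<le> c - XX c d n mod c"
  by (simp_all only: XX.simps incs)

lemmas modinc = divinc(3,4)

lemma Lc: "lcm c d = (d div gcd c d) * c"
proof -
  have "c * (d div gcd c d) = c * d div gcd c d" by (rule div_mult_swap) simp
  then show ?thesis by (simp add: lcm_nat_def mult.commute)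
qed
lemma Ld: "lcm c d = (c div gcd c d) * d"
proof -
  have "d * (c div gcd c d) = d * c div gcd c d" by (rule div_mult_swap) simp
  then show ?thesis by (simp add: lcm_nat_def mult.commute)
qed

lemma nextmul: "(k::nat) > 0 \<Longrightarrow> x + (k - x mod k) = (x div k + 1) * k"
proof -
  assume cp: "k > 0"
  have "x mod k < k" using cp by simp
  moreover have "x = x div k * k + x mod k" by simp
  moreover have "(x div k + 1)*k = x div k * k + k" by simp
  ultimately show ?thesis by linarith
qed

lemma XXle: "XX c d (Suc n) \<le> (XX c d n div c + 1) * c"
proof -
  let ?x = "XX c d n"
  have "XX c d (Suc n) \<le> ?x + (c - ?x mod c)" by (simp add: XX.simps)
  also have "\<dots> = (?x div c + 1) * c" using cp by (rule nextmul)
  finally show ?thesis .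
qed

lemma G:
  assumes "XX c d n < lcm c d"
  shows "XX c d (Suc n) \<le> lcm c d"
    and "XX c d (Suc n) < lcm c d \<Longrightarrow> XX c d (Suc n) div c + XX c d (Suc n) div d = XX c d n div c + XX c d n div d + 1"
    and "XX c d (Suc n) = lcm c d \<Longrightarrow> XX c d n div c + XX c d n div d + 2 = c div gcd c d + d div gcd c d"
proof -
  let ?x = "XX c d n" and ?y = "XX c d (Suc n)" and ?L = "lcm c d"
  define s t where "s = c - ?x mod c" and "t = d - ?x mod d"
  have D1: "?y div c = ?x div c + (if s \<le> t then 1 else 0)" using divinc(1) by (simp add: s_def t_def)
  have D2: "?y div d = ?x div d + (if t \<le> s then 1 else 0)" using divinc(2) by (simp add: s_def t_def)
  have M1: "?y mod c = 0 \<longleftrightarrow> s \<le> t" using divinc(3) by (simp add: s_def t_def)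
  have M2: "?y mod d = 0 \<longleftrightarrow> t \<le> s" using divinc(4) by (simp add: s_def t_def)
  have "?x < d div gcd c d * c" using assms Lc by simp
  then have "?x div c < d div gcd c d" using cp by (simp add: div_less_iff_less_mult)
  then have "?x div c + 1 \<le> d div gcd c d" by simp
  then have "(?x div c + 1) * c \<le> d div gcd c d * c" by (rule mult_le_mono1)
  then show "?y \<le> ?L" using XXle[of n] Lc by linarith
  have pos: "?y > 0" using cp dp by (simp add: XX.simps)
  show "?y div c + ?y div d = ?x div c + ?x div d + 1" if "?y < ?L"
  proof -
    have "\<not> (?y mod c = 0 \<and> ?y mod d = 0)"
    proof
      assume "?y mod c = 0 \<and> ?y mod d = 0"
      then have "?L dvd ?y" by (simp add: mod_0_imp_dvd)
      then have "?L \<le> ?y" using pos by (simp add: dvd_imp_le)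
      with that show False by simp
    qed
    then have "\<not> (s \<le> t \<and> t \<le> s)" using M1 M2 by simp
    then show ?thesis using D1 D2 by auto
  qed
  show "?x div c + ?x div d + 2 = c div gcd c d + d div gcd c d" if "?y = ?L"
  proof -
    have "?y mod c = 0" "?y mod d = 0" using that by auto
    then have "s \<le> t" "t \<le> s" using M1 M2 by auto
    then have "?y div c = ?x div c + 1" "?y div d = ?x div d + 1" using D1 D2 by auto
    moreover have "?L div c = d div gcd c d" using Lc cp by simp
    moreover have "?L div d = c div gcd c d" using Ld dp by simp
    ultimately show ?thesis using that by simp
  qed
qed

lemma bound:
  assumes "y < lcm c d"
  shows "y div c + y div d + 2 \<le> c div gcd c d + d div gcd c d"
proof -
  have "y div c < d div gcd c d" using assms Lc by (metis cp div_less_iff_less_mult)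
  moreover have "y div d < c div gcd c d" using assms Ld by (metis dp div_less_iff_less_mult)
  ultimately show ?thesis by simp
qed

lemma A:
  "n < c div gcd c d + d div gcd c d - 1 \<Longrightarrow> XX c d n < lcm c d \<and> XX c d n div c + XX c d n div d = n"
proof (induction n)
  case 0
  then show ?case using cp dp by (simp add: lcm_pos_nat)
next
  case (Suc n)
  then have ih: "XX c d n < lcm c d" "XX c d n div c + XX c d n div d = n" by auto
  have "XX c d (Suc n) \<noteq> lcm c d"
    using G(3)[OF ih(1)] ih(2) Suc.prems by auto
  then have lt: "XX c d (Suc n) < lcm c d" using G(1)[OF ih(1)] by simp
  then show ?case using G(2)[OF ih(1) lt] ih(2) by simp
qed

lemma B: "XX c d (c div gcd c d + d div gcd c d - 1) = lcm c d"
proof -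
  let ?e = "c div gcd c d" and ?e' = "d div gcd c d"
  have "gcd c d \<le> c" "gcd c d \<le> d" "gcd c d > 0" using cp dp by (auto intro: gcd_le1_nat gcd_le2_nat)
  then have "?e > 0" "?e' > 0" by (simp_all add: div_greater_zero_iff)
  then have e1: "?e \<ge> 1" "?e' \<ge> 1" by simp_all
  define n where "n = ?e + ?e' - 2"
  have sn: "Suc n = ?e + ?e' - 1" using e1 n_def by simp
  have "n < ?e + ?e' - 1" using e1 n_def by simp
  from A[OF this] have ih: "XX c d n < lcm c d" "XX c d n div c + XX c d n div d = n" by auto
  have "XX c d (Suc n) = lcm c d"
  proof (rule ccontr)
    assume "XX c d (Suc n) \<noteq> lcm c d"
    then have lt: "XX c d (Suc n) < lcm c d" using G(1)[OF ih(1)] by simp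
    from G(2)[OF ih(1) lt] ih(2) bound[OF lt] n_def e1 show False by simp
  qed
  then show ?thesis using sn by simp
qed

lemma periodic: "XX c d (n + (c div gcd c d + d div gcd c d - 1)) = XX c d n + lcm c d"
proof (induction n)
  case 0
  then show ?case using B by simp
next
  case (Suc n)
  have m1: "(XX c d n + lcm c d) mod c = XX c d n mod c" by (simp add: Lc)
  have m2: "(XX c d n + lcm c d) mod d = XX c d n mod d" by (simp add: Ld)
  show ?case using Suc m1 m2 by (simp add: XX.simps)
qed

lemma cdseqX: "cdseq c d (Suc j) = st c d (XX c d j)"
  unfolding cdseq_def using cdseq_XX[OF cp dp] by simp

lemma muX: "mu c d (Suc j) + XX c d j = XX c d (Suc j)"
  by (simp add: mu_def cdseqX st_def XX.simps)

lemma nuX: "nu c d ct dt (Suc j) =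
   (if c - XX c d j mod c \<le> d - XX c d j mod d then ct else 0)
 + (if d - XX c d j mod d \<le> c - XX c d j mod c then dt else 0)"
  by (simp add: nu_def cdseqX st_def Let_def)

lemma musum: "(\<Sum>k = 2..n + 1. mu c d k) + XX c d 1 = XX c d (n + 1)"
proof (induction n)
  case 0
  then show ?case by simp
next
  case (Suc n)
  have "(\<Sum>k = 2..Suc n + 1. mu c d k) = (\<Sum>k = 2..n + 1. mu c d k) + mu c d (Suc (Suc n))"
    by simp
  then show ?case using Suc muX[of "Suc n"] by simp
qed

lemma nusum: "(\<Sum>k = 2..n + 1. nu c d ct dt k) + ct * int (XX c d 1 div c) + dt * int (XX c d 1 div d)
   = ct * int (XX c d (n + 1) div c) + dt * int (XX c d (n + 1) div d)"
proof (induction n)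
  case 0
  then show ?case by simp
next
  case (Suc n)
  have SS: "(\<Sum>k = 2..Suc n + 1. nu c d ct dt k) = (\<Sum>k = 2..n + 1. nu c d ct dt k) + nu c d ct dt (Suc (Suc n))"
    by simp
  define A where "A = (\<Sum>k = 2..n + 1. nu c d ct dt k)"
  define x where "x = XX c d (Suc n)"
  define y where "y = XX c d (Suc (Suc n))"
  define s where "s = c - x mod c"
  define t where "t = d - x mod d"
  have IH: "A + ct * int (XX c d 1 div c) + dt * int (XX c d 1 div d) = ct * int (x div c) + dt * int (x div d)"
    using Suc.IH unfolding A_def x_def by simp
  have N: "nu c d ct dt (Suc (Suc n)) = (if s \<le> t then ct else 0) + (if t \<le> s then dt else 0)"
    using nuX[of ct dt "Suc n"] unfolding s_def t_def x_def .
  have D1: "y div c = x div c + (if s \<le> t then 1 else 0)" using divinc(1)[of "Suc n"] unfolding s_def t_def x_def y_def .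
  have D2: "y div d = x div d + (if t \<le> s then 1 else 0)" using divinc(2)[of "Suc n"] unfolding s_def t_def x_def y_def .
  have "(\<Sum>k = 2..Suc n + 1. nu c d ct dt k) + ct * int (XX c d 1 div c) + dt * int (XX c d 1 div d)
     = ct * int (y div c) + dt * int (y div d)"
    unfolding SS A_def[symmetric] N D1 D2 using IH by (auto simp: algebra_simps)
  then show ?case unfolding y_def by simp
qed

lemma main:
  "(\<forall>k\<ge>1. cdseq c d (k + (c div gcd c d + d div gcd c d - 1)) = cdseq c d k)
    \<and> (\<Sum>k = 2..(c div gcd c d + d div gcd c d - 1) + 1. mu c d k) = lcm c d
    \<and> (\<forall>ct dt :: int. (\<Sum>k = 2..(c div gcd c d + d div gcd c d - 1) + 1. nu c d ct dt k)
        = int (c div gcd c d) * dt + int (d div gcd c d) * ct)"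
proof -
  define p where "p = c div gcd c d + d div gcd c d - 1"
  have per: "XX c d (n + p) = XX c d n + lcm c d" for n using periodic p_def by simp
  have 1: "cdseq c d (k + p) = cdseq c d k" if k1: "k \<ge> 1" for k
  proof -
    obtain j where j: "k = Suc j" using k1 by (cases k) auto
    have "cdseq c d (k + p) = st c d (XX c d (j + p))" using j cdseqX[of "j + p"] by simp
    also have "\<dots> = st c d (XX c d j)"
    proof -
      have "(XX c d j + lcm c d) mod c = XX c d j mod c" by (simp add: Lc)
      moreover have "(XX c d j + lcm c d) mod d = XX c d j mod d" by (simp add: Ld)
      ultimately show ?thesis unfolding per st_def by simp
    qed
    finally show ?thesis using j cdseqX by simp
  qed
  have x: "XX c d (p + 1) = XX c d 1 + lcm c d" using per[of 1] by (simp add: add.commute)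
  have 2: "(\<Sum>k = 2..p + 1. mu c d k) = lcm c d" using musum[of p] x by simp
  have 3: "(\<Sum>k = 2..p + 1. nu c d ct dt k) = int (c div gcd c d) * dt + int (d div gcd c d) * ct"
    for ct dt :: int
  proof -
    have a: "XX c d (p + 1) div c = XX c d 1 div c + d div gcd c d" using x Lc cp by simp
    have b: "XX c d (p + 1) div d = XX c d 1 div d + c div gcd c d" using x Ld dp by simp
    show ?thesis using nusum[of ct dt p] a b by (simp add: algebra_simps)
  qed
  show ?thesis using 1 2 3 p_def by simp
qed

end

theorem mainTheorem4:
  fixes c d :: nat
  assumes "c > 0" and "d > 0"
  defines "e \<equiv> c div gcd c d" and "e' \<equiv> d div gcd c d"
  defines "p \<equiv> e + e' - 1"
  shows "(\<forall>k\<ge>1. cdseq c d (k + p) = cdseq c d k)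
    \<and> (\<Sum>k = 2..p + 1. mu c d k) = lcm c d
    \<and> (\<forall>ct dt :: int. (\<Sum>k = 2..p + 1. nu c d ct dt k) = int e * dt + int e' * ct)"
  using main[OF assms(1,2)] unfolding e_def e'_def p_def by simp

end
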